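(* Let $(G,\lambda),s,t$ be a minimum counter-example. Then $G$ is 2-connected, and every multiedge incident to $s$ or to $t$ has multiplicity $1$.
   Context: Graphs are finite, loopless, and may have parallel edges. The multiplicity of a pair $x,y$ is the number of edges with endpoints $x,y$; a pair of multiplicity at least 1 is a multiedge. A temporal graph is a pair $(G,\lambda)$ with $\lambda:E(G)\to\mathbb{Z}_{>0}$. A temporal $s,t$-path is an $s,t$-path $(s=v_1,e_1,\dots,e_{k-1},v_k=t)$ of $G$ (no repeated vertices) with $\lambda(e_1)\le\dots\le\lambda(e_{k-1})$. Two temporal $s,t$-paths are disjoint if they share no vertex other than $s,t$. For distinct non-adjacent $s,t$, a temporal $s,t$-vertex cut is a set $S\subseteq V(G)\setminus\{s,t\}$ such that $G-S$ (with $\lambda$ restricted) has no temporal $s,t$-path. $p_{G,\lambda}(s,t)$ is the maximum number of pairwise disjoint temporal $s,t$-paths and $c_{G,\lambda}(s,t)$ the minimum size of a temporal $s,t$-vertex cut. m-subdividing a multiedge $xy$ of multiplicity $k$: delete the $k$ edges between $x,y$, add a new vertex $z$, $k$ parallel edges $xz$ and $k$ parallel edges $zy$. An m-subdivision of $H$ is a graph obtained from $H$ by a finite (possibly empty) sequence of such operations; $H$ is an m-topological minor of $G$ if $G$ has a subgraph isomorphic to an m-subdivision of $H$. $\mathcal{F}_3$ is the gem: simple graph on $s,u,v,t,x$ with edges $su,uv,vt,xs,xu,xv,xt$. $\mathcal{F}_1$: vertices $s,u,v,t,w,w'$, simple edges $su,uv,vt,sw,wt,uw',w'v$, and exactly two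 parallel edges between $w,w'$. $\mathcal{F}_2$: vertices $s,u,v,t,w,w'$, simple edges $su,uv,vt,sw,uw,w'v,w't$, and exactly two parallel edges between $w,w'$. A minimum counter-example is a triple $(G,\lambda),s,t$ with $s,t\in V(G)$ distinct and non-adjacent, such that $p_{G,\lambda}(s,t)<c_{G,\lambda}(s,t)$, none of $\mathcal{F}_1,\mathcal{F}_2,\mathcal{F}_3$ is an m-topological minor of $G$, and $|V(G)|+|E(G)|$ is minimum among all such triples. *)

theory Defs
  imports Main
begin

text \<open>Vertices and edge identifiers are natural numbers;
  every finite multigraph is isomorphic to one of this form, and all notions below are
  invariant under isomorphism.\<close>

record mgraph =
  verts :: "nat set"
  edges :: "nat set"
  ends  :: "nat \<Rightarrow> nat set"

definition wf_mgraph :: "mgraph \<Rightarrow> bool" where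
  "wf_mgraph G \<longleftrightarrow> finite (verts G) \<and> finite (edges G) \<and>
     (\<forall>e\<in>edges G. ends G e \<subseteq> verts G \<and> card (ends G e) = 2)"

definition gsize :: "mgraph \<Rightarrow> nat" where
  "gsize G = card (verts G) + card (edges G)"

definition mult :: "mgraph \<Rightarrow> nat \<Rightarrow> nat \<Rightarrow> nat" where
  "mult G x y = card {e \<in> edges G. ends G e = {x, y}}"

definition adj :: "mgraph \<Rightarrow> nat \<Rightarrow> nat \<Rightarrow> bool" where
  "adj G x y \<longleftrightarrow> (\<exists>e\<in>edges G. ends G e = {x, y})"

definition temporal_labelling :: "mgraph \<Rightarrow> (nat \<Rightarrow> nat) \<Rightarrow> bool" where
  "temporal_labelling G lam \<longleftrightarrow> (\<forall>e\<in>edges G. lam e > 0)"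

definition del_verts :: "mgraph \<Rightarrow> nat set \<Rightarrow> mgraph" where
  "del_verts G S = G\<lparr> verts := verts G - S,
                      edges := {e \<in> edges G. ends G e \<inter> S = {}} \<rparr>"

definition tpath :: "mgraph \<Rightarrow> (nat \<Rightarrow> nat) \<Rightarrow> nat \<Rightarrow> nat \<Rightarrow> nat list \<Rightarrow> nat list \<Rightarrow> bool" where
  "tpath G lam s t vs es \<longleftrightarrow>
     vs \<noteq> [] \<and> hd vs = s \<and> last vs = t \<and> distinct vs \<and> set vs \<subseteq> verts G \<and>
     length vs = length es + 1 \<and> set es \<subseteq> edges G \<and>
     (\<forall>i < length es. ends G (es ! i) = {vs ! i, vs ! Suc i}) \<and>
     sorted (map lam es)"

definition p_num :: "mgraph \<Rightarrow> (nat \<Rightarrow> nat) \<Rightarrow> nat \<Rightarrow> nat \<Rightarrow> nat" where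
  "p_num G lam s t = (GREATEST k. \<exists>P :: (nat list \<times> nat list) list.
      length P = k \<and> (\<forall>q\<in>set P. tpath G lam s t (fst q) (snd q)) \<and>
      (\<forall>i<k. \<forall>j<k. i \<noteq> j \<longrightarrow> set (fst (P ! i)) \<inter> set (fst (P ! j)) \<subseteq> {s, t}))"

definition temporal_cut :: "mgraph \<Rightarrow> (nat \<Rightarrow> nat) \<Rightarrow> nat \<Rightarrow> nat \<Rightarrow> nat set \<Rightarrow> bool" where
  "temporal_cut G lam s t S \<longleftrightarrow> S \<subseteq> verts G - {s, t} \<and>
      \<not> (\<exists>vs es. tpath (del_verts G S) lam s t vs es)"

definition c_num :: "mgraph \<Rightarrow> (nat \<Rightarrow> nat) \<Rightarrow> nat \<Rightarrow> nat \<Rightarrow> nat" where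
  "c_num G lam s t = (LEAST k. \<exists>S. temporal_cut G lam s t S \<and> card S = k)"

definition msub_step :: "mgraph \<Rightarrow> mgraph \<Rightarrow> bool" where
  "msub_step H H' \<longleftrightarrow> (\<exists>x y z A B.
     x \<in> verts H \<and> y \<in> verts H \<and> x \<noteq> y \<and> mult H x y \<ge> 1 \<and> z \<notin> verts H \<and>
     verts H' = insert z (verts H) \<and>
     finite A \<and> finite B \<and> card A = mult H x y \<and> card B = mult H x y \<and>
     A \<inter> B = {} \<and>
     A \<inter> {e \<in> edges H. ends H e \<noteq> {x, y}} = {} \<and>
     B \<inter> {e \<in> edges H. ends H e \<noteq> {x, y}} = {} \<and>
     edges H' = {e \<in> edges H. ends H e \<noteq> {x, y}} \<union> A \<union> B \<and>
     (\<forall>e \<in> {e \<in> edges H. ends H e \<noteq> {x, y}}. ends H' e = ends H e) \<and>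
     (\<forall>e\<in>A. ends H' e = {x, z}) \<and> (\<forall>e\<in>B. ends H' e = {z, y}))"

definition m_subdivision :: "mgraph \<Rightarrow> mgraph \<Rightarrow> bool" where
  "m_subdivision H H' \<longleftrightarrow> msub_step\<^sup>*\<^sup>* H H'"

definition has_subgraph_iso :: "mgraph \<Rightarrow> mgraph \<Rightarrow> bool" where
  "has_subgraph_iso G H' \<longleftrightarrow> (\<exists>\<phi> \<psi>.
     inj_on \<phi> (verts H') \<and> \<phi> ` verts H' \<subseteq> verts G \<and>
     inj_on \<psi> (edges H') \<and> \<psi> ` edges H' \<subseteq> edges G \<and>
     (\<forall>e\<in>edges H'. ends G (\<psi> e) = \<phi> ` ends H' e))"

definition m_top_minor :: "mgraph \<Rightarrow> mgraph \<Rightarrow> bool" where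
  "m_top_minor H G \<longleftrightarrow> (\<exists>H'. m_subdivision H H' \<and> has_subgraph_iso G H')"

definition list_graph :: "nat set \<Rightarrow> nat set list \<Rightarrow> mgraph" where
  "list_graph V L = \<lparr> verts = V, edges = {..<length L},
                      ends = (\<lambda>e. if e < length L then L ! e else {}) \<rparr>"

text \<open>s=0, u=1, v=2, t=3, w=4, w'=5\<close>
definition F1 :: mgraph where
  "F1 = list_graph {0,1,2,3,4,5}
     [{0,1},{1,2},{2,3},{0,4},{4,3},{1,5},{5,2},{4,5},{4,5}]"

definition F2 :: mgraph where
  "F2 = list_graph {0,1,2,3,4,5}
     [{0,1},{1,2},{2,3},{0,4},{1,4},{5,2},{5,3},{4,5},{4,5}]"

text \<open>gem: s=0, u=1, v=2, t=3, x=4\<close>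
definition F3 :: mgraph where
  "F3 = list_graph {0,1,2,3,4}
     [{0,1},{1,2},{2,3},{4,0},{4,1},{4,2},{4,3}]"

definition counter_example :: "mgraph \<Rightarrow> (nat \<Rightarrow> nat) \<Rightarrow> nat \<Rightarrow> nat \<Rightarrow> bool" where
  "counter_example G lam s t \<longleftrightarrow>
     wf_mgraph G \<and> temporal_labelling G lam \<and>
     s \<in> verts G \<and> t \<in> verts G \<and> s \<noteq> t \<and> \<not> adj G s t \<and>
     p_num G lam s t < c_num G lam s t \<and>
     \<not> m_top_minor F1 G \<and> \<not> m_top_minor F2 G \<and> \<not> m_top_minor F3 G"

definition min_counter_example :: "mgraph \<Rightarrow> (nat \<Rightarrow> nat) \<Rightarrow> nat \<Rightarrow> nat \<Rightarrow> bool" where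
  "min_counter_example G lam s t \<longleftrightarrow> counter_example G lam s t \<and>
     (\<forall>G' lam' s' t'. counter_example G' lam' s' t' \<longrightarrow> gsize G \<le> gsize G')"

definition connected_on :: "mgraph \<Rightarrow> nat set \<Rightarrow> bool" where
  "connected_on G W \<longleftrightarrow>
     (\<forall>x\<in>W. \<forall>y\<in>W. (\<lambda>a b. a \<in> W \<and> b \<in> W \<and> adj G a b)\<^sup>*\<^sup>* x y)"

definition two_connected :: "mgraph \<Rightarrow> bool" where
  "two_connected G \<longleftrightarrow> card (verts G) \<ge> 3 \<and> connected_on G (verts G) \<and>
     (\<forall>v\<in>verts G. connected_on G (verts G - {v}))"

end

theory Submission
  imports Defs
begin

lemma del_simps[simp]: "verts (del_verts G S) = verts G - S"
  "edges (del_verts G S) = {e \<in> edges G. ends G e \<inter> S = {}}" "ends (del_verts G S) = ends G"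
  by (simp_all add: del_verts_def)

lemma tpath_del: "tpath (del_verts G S) lam s t vs es \<longleftrightarrow> tpath G lam s t vs es \<and> set vs \<inter> S = {}"
proof
  assume "tpath (del_verts G S) lam s t vs es"
  then show "tpath G lam s t vs es \<and> set vs \<inter> S = {}"
    unfolding tpath_def by auto
next
  assume a: "tpath G lam s t vs es \<and> set vs \<inter> S = {}"
  have "\<forall>e\<in>set es. ends G e \<inter> S = {}"
  proof
    fix e assume "e \<in> set es"
    then obtain i where i: "i < length es" "es!i = e" by (auto simp: in_set_conv_nth)
    then have "ends G e = {vs!i, vs!Suc i}" using a unfolding tpath_def by auto
    moreover have "vs!i \<in> set vs" "vs!Suc i \<in> set vs" using i a unfolding tpath_def by auto
    ultimately show "ends G e \<inter> S = {}" using a by auto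
  qed
  then show "tpath (del_verts G S) lam s t vs es" using a unfolding tpath_def by auto
qed

lemma tpath_sub: "verts G' \<subseteq> verts G \<Longrightarrow> edges G' \<subseteq> edges G \<Longrightarrow> ends G' = ends G
   \<Longrightarrow> tpath G' lam s t vs es \<Longrightarrow> tpath G lam s t vs es"
  unfolding tpath_def by auto

lemma tpath_basic:
  assumes "tpath G lam s t vs es" "s \<noteq> t"
  shows "length vs \<ge> 2" "vs!0 = s" "vs ! (length vs - 1) = t" "length es = length vs - 1"
proof -
  have ne: "vs \<noteq> []" "hd vs = s" "last vs = t" using assms unfolding tpath_def by auto
  show "vs!0 = s" using ne by (simp add: hd_conv_nth)
  show "vs ! (length vs - 1) = t" using ne by (simp add: last_conv_nth)
  show "length es = length vs - 1" using assms unfolding tpath_def by auto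
  show "length vs \<ge> 2"
  proof (rule ccontr)
    assume "\<not> length vs \<ge> 2"
    moreover have "length vs > 0" using ne by simp
    ultimately have "length vs = 1" by linarith
    then show False using ne assms(2) by (cases vs) auto
  qed
qed

lemma tpath_long:
  assumes tp: "tpath G lam s t vs es" and st: "s \<noteq> t" and na: "\<not> adj G s t"
  shows "length vs \<ge> 3"
proof (rule ccontr)
  assume "\<not> length vs \<ge> 3"
  then have l2: "length vs = 2" using tpath_basic[OF tp st] by linarith
  then have l1: "length es = 1" using tpath_basic[OF tp st] by simp
  then have "ends G (es!0) = {vs!0, vs!1}" "es!0 \<in> edges G" using tp unfolding tpath_def by auto
  moreover have "vs!0 = s" "vs!1 = t" using tpath_basic[OF tp st] l2 by auto
  ultimately have "adj G s t" unfolding adj_def by auto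
  then show False using na by simp
qed

lemma cut_exists:
  assumes "\<not> adj G s t" "s \<noteq> t"
  shows "temporal_cut G lam s t (verts G - {s,t})"
  unfolding temporal_cut_def
proof (intro conjI notI)
  show "verts G - {s, t} \<subseteq> verts G - {s, t}" by simp
  assume "\<exists>vs es. tpath (del_verts G (verts G - {s, t})) lam s t vs es"
  then obtain vs es where tp: "tpath G lam s t vs es" and av: "set vs \<inter> (verts G - {s,t}) = {}"
    by (auto simp: tpath_del)
  have "set vs \<subseteq> verts G" "distinct vs" using tp unfolding tpath_def by auto
  then have "set vs \<subseteq> {s,t}" using av by auto
  then have "card (set vs) \<le> 2" using card_mono[of "{s,t}" "set vs"] assms(2) by simp
  moreover have "card (set vs) = length vs" using \<open>distinct vs\<close> by (simp add: distinct_card)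
  ultimately show False using tpath_long[OF tp assms(2,1)] by simp
qed

definition pfam :: "mgraph \<Rightarrow> (nat \<Rightarrow> nat) \<Rightarrow> nat \<Rightarrow> nat \<Rightarrow> nat \<Rightarrow> bool" where
  "pfam G lam s t k \<longleftrightarrow> (\<exists>P :: (nat list \<times> nat list) list.
      length P = k \<and> (\<forall>q\<in>set P. tpath G lam s t (fst q) (snd q)) \<and>
      (\<forall>i<k. \<forall>j<k. i \<noteq> j \<longrightarrow> set (fst (P ! i)) \<inter> set (fst (P ! j)) \<subseteq> {s, t}))"

lemma p_num_pfam: "p_num G lam s t = Greatest (pfam G lam s t)"
  by (simp add: p_num_def pfam_def[abs_def])

lemma pfam_bound:
  assumes wf: "wf_mgraph G" and na: "\<not> adj G s t" and st: "s \<noteq> t" and pf: "pfam G lam s t k"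
  shows "k \<le> card (verts G)"
proof -
  obtain P where P: "length P = k" "\<forall>q\<in>set P. tpath G lam s t (fst q) (snd q)"
    "\<forall>i<k. \<forall>j<k. i \<noteq> j \<longrightarrow> set (fst (P ! i)) \<inter> set (fst (P ! j)) \<subseteq> {s, t}"
    using pf unfolding pfam_def by blast
  define f where "f i = fst (P!i) ! 1" for i
  have tp: "tpath G lam s t (fst (P!i)) (snd (P!i))" if "i<k" for i
    using P that nth_mem by metis
  have inn: "f i \<in> set (fst (P!i)) \<and> f i \<in> verts G - {s,t}" if "i<k" for i
  proof -
    let ?vs = "fst (P!i)"
    have t1: "tpath G lam s t ?vs (snd (P!i))" using tp that .
    have l3: "length ?vs \<ge> 3" using tpath_long[OF t1 st na] .
    have d: "distinct ?vs" "set ?vs \<subseteq> verts G" using t1 unfolding tpath_def by auto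
    have m: "f i \<in> set ?vs" unfolding f_def using l3 by simp
    have "f i \<noteq> s"
    proof
      assume "f i = s"
      then have "?vs ! 1 = ?vs ! 0" using tpath_basic(2)[OF t1 st] unfolding f_def by simp
      moreover have "1 < length ?vs" "0 < length ?vs" using l3 by auto
      ultimately have "(1::nat) = 0" using nth_eq_iff_index_eq[OF d(1)] by blast
      then show False by simp
    qed
    moreover have "f i \<noteq> t"
    proof
      assume "f i = t"
      then have "?vs ! 1 = ?vs ! (length ?vs - 1)" using tpath_basic(3)[OF t1 st] unfolding f_def by simp
      moreover have "1 < length ?vs" "length ?vs - 1 < length ?vs" using l3 by auto
      ultimately have "1 = length ?vs - 1" using nth_eq_iff_index_eq[OF d(1)] by blast
      then show False using l3 by simp
    qed
    ultimately show ?thesis using m d by auto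
  qed
  have "inj_on f {..<k}"
  proof (rule inj_onI)
    fix i j assume "i \<in> {..<k}" "j \<in> {..<k}" "f i = f j"
    then have "i < k" "j < k" by auto
    show "i = j"
    proof (rule ccontr)
      assume "i \<noteq> j"
      then have "set (fst (P ! i)) \<inter> set (fst (P ! j)) \<subseteq> {s, t}" using P(3) \<open>i<k\<close> \<open>j<k\<close> by blast
      moreover have "f i \<in> set (fst (P ! i))" "f i \<in> set (fst (P ! j))" "f i \<notin> {s,t}"
        using inn[OF \<open>i<k\<close>] inn[OF \<open>j<k\<close>] \<open>f i = f j\<close> by (auto simp del: f_def)
      ultimately show False by blast
    qed
  qed
  moreover have "f ` {..<k} \<subseteq> verts G" using inn by auto
  moreover have "finite (verts G)" using wf unfolding wf_mgraph_def by simp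
  ultimately have "card {..<k} \<le> card (verts G)" by (metis card_inj_on_le)
  then show ?thesis by simp
qed


lemma subiso_lem:
  assumes sub: "verts G' \<subseteq> verts G" "edges G' \<subseteq> edges G" "ends G' = ends G"
  and "has_subgraph_iso G' H" shows "has_subgraph_iso G H"
proof -
  from assms(4) obtain f g where h: "inj_on f (verts H) \<and> f ` verts H \<subseteq> verts G' \<and>
      inj_on g (edges H) \<and> g ` edges H \<subseteq> edges G' \<and>
      (\<forall>e\<in>edges H. ends G' (g e) = f ` ends H e)" unfolding has_subgraph_iso_def by (elim exE) (rule that)
  then have "inj_on f (verts H) \<and> f ` verts H \<subseteq> verts G \<and>
      inj_on g (edges H) \<and> g ` edges H \<subseteq> edges G \<and>
      (\<forall>e\<in>edges H. ends G (g e) = f ` ends H e)" using sub by (metis order_trans)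
  then show ?thesis unfolding has_subgraph_iso_def by (intro exI)
qed

lemma reduce:
  assumes ce: "counter_example G lam s t"
    and sub: "verts G' \<subseteq> verts G" "edges G' \<subseteq> edges G" "ends G' = ends G"
    and ev: "\<forall>e\<in>edges G'. ends G e \<subseteq> verts G'"
    and st: "s \<in> verts G'" "t \<in> verts G'"
    and small: "gsize G' < gsize G"
    and tr: "\<And>vs es. tpath G lam s t vs es \<Longrightarrow> \<exists>es'. tpath G' lam s t vs es'"
  shows "\<not> min_counter_example G lam s t"
proof
  assume m: "min_counter_example G lam s t"
  have wf: "wf_mgraph G" and lab: "temporal_labelling G lam" and sneq: "s \<noteq> t"
    and na: "\<not> adj G s t" and pc: "p_num G lam s t < c_num G lam s t"
    and F: "\<not> m_top_minor F1 G" "\<not> m_top_minor F2 G" "\<not> m_top_minor F3 G"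
    using ce unfolding counter_example_def by auto
  have wf': "wf_mgraph G'" using wf sub ev unfolding wf_mgraph_def
    by (metis (no_types, lifting) rev_finite_subset subsetD)
  have lab': "temporal_labelling G' lam" using lab sub unfolding temporal_labelling_def by auto
  have na': "\<not> adj G' s t"
  proof
    assume "adj G' s t"
    then obtain e where "e \<in> edges G'" "ends G' e = {s,t}" unfolding adj_def by blast
    then have "e \<in> edges G" "ends G e = {s,t}" using sub by (auto dest: subsetD)
    then show False using na unfolding adj_def by blast
  qed
  have subiso: "has_subgraph_iso G' H \<Longrightarrow> has_subgraph_iso G H" for H
    using subiso_lem[OF sub] by blast
  have F': "\<not> m_top_minor F1 G'" "\<not> m_top_minor F2 G'" "\<not> m_top_minor F3 G'"
    using F subiso unfolding m_top_minor_def by blast+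
  have pmono: "pfam G' lam s t k \<Longrightarrow> pfam G lam s t k" for k
    unfolding pfam_def using tpath_sub[OF sub] by blast
  have bnd: "pfam G' lam s t k \<Longrightarrow> k \<le> card (verts G)" for k
    using pfam_bound[OF wf na sneq] pmono by blast
  have p0: "pfam G' lam s t 0" unfolding pfam_def by auto
  have "pfam G' lam s t (Greatest (pfam G' lam s t))"
    by (rule GreatestI_nat[where P="pfam G' lam s t", OF p0 bnd])
  then have "pfam G lam s t (p_num G' lam s t)" using pmono by (simp add: p_num_pfam)
  then have pp: "p_num G' lam s t \<le> p_num G lam s t"
    unfolding p_num_pfam[of G] using pfam_bound[OF wf na sneq] by (rule Greatest_le_nat)
  define Q' where "Q' = (\<lambda>k. \<exists>S. temporal_cut G' lam s t S \<and> card S = k)"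
  have "Q' (card (verts G' - {s,t}))" unfolding Q'_def using cut_exists[OF na' sneq] by blast
  then have "Q' (Least Q')" by (rule LeastI)
  then obtain S where S: "temporal_cut G' lam s t S" "card S = c_num G' lam s t"
    unfolding Q'_def c_num_def by blast
  have cutG: "temporal_cut G lam s t S"
    unfolding temporal_cut_def
  proof (intro conjI notI)
    show "S \<subseteq> verts G - {s, t}" using S(1) sub unfolding temporal_cut_def by auto
    assume "\<exists>vs es. tpath (del_verts G S) lam s t vs es"
    then obtain vs es where "tpath G lam s t vs es" "set vs \<inter> S = {}" by (auto simp: tpath_del)
    then obtain es' where "tpath G' lam s t vs es'" "set vs \<inter> S = {}" using tr by blast
    then have "tpath (del_verts G' S) lam s t vs es'" by (simp add: tpath_del)
    then show False using S(1) unfolding temporal_cut_def by blast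
  qed
  have "(LEAST k. \<exists>S. temporal_cut G lam s t S \<and> card S = k) \<le> card S"
    by (rule Least_le) (rule exI[of _ S], simp add: cutG)
  then have "c_num G lam s t \<le> c_num G' lam s t"
    unfolding c_num_def[of G] using S(2) by simp
  then have "p_num G' lam s t < c_num G' lam s t" using pp pc by linarith
  then have "counter_example G' lam s t"
    unfolding counter_example_def using wf' lab' st sneq na' F' by blast
  then have "gsize G \<le> gsize G'" using m unfolding min_counter_example_def by blast
  then show False using small by simp
qed

lemma del_vertex:
  assumes ce: "counter_example G lam s t" and x: "x \<in> verts G" "x \<noteq> s" "x \<noteq> t"
    and nop: "\<And>vs es. tpath G lam s t vs es \<Longrightarrow> x \<notin> set vs"
  shows "\<not> min_counter_example G lam s t"
proof (rule reduce[OF ce, of "del_verts G {x}"])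
  have wf: "wf_mgraph G" using ce unfolding counter_example_def by auto
  show "verts (del_verts G {x}) \<subseteq> verts G" "edges (del_verts G {x}) \<subseteq> edges G"
    "ends (del_verts G {x}) = ends G" by auto
  show "\<forall>e\<in>edges (del_verts G {x}). ends G e \<subseteq> verts (del_verts G {x})"
    using wf unfolding wf_mgraph_def by auto
  show "s \<in> verts (del_verts G {x})" "t \<in> verts (del_verts G {x})"
    using ce x unfolding counter_example_def by auto
  have fin: "finite (verts G)" "finite (edges G)" using wf unfolding wf_mgraph_def by auto
  have "card (verts G - {x}) < card (verts G)" using fin x by (metis card_Diff1_less)
  moreover have "card {e \<in> edges G. ends G e \<inter> {x} = {}} \<le> card (edges G)"
    using fin by (intro card_mono) auto
  ultimately show "gsize (del_verts G {x}) < gsize G" unfolding gsize_def by simp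
  fix vs es assume "tpath G lam s t vs es"
  then show "\<exists>es'. tpath (del_verts G {x}) lam s t vs es'" using nop by (auto simp: tpath_del)
qed


definition rl :: "mgraph \<Rightarrow> nat set \<Rightarrow> nat \<Rightarrow> nat \<Rightarrow> bool" where
  "rl G W a b \<longleftrightarrow> a \<in> W \<and> b \<in> W \<and> adj G a b"

lemma connected_on_rl: "connected_on G W \<longleftrightarrow> (\<forall>x\<in>W. \<forall>y\<in>W. (rl G W)\<^sup>*\<^sup>* x y)"
  by (simp add: connected_on_def rl_def[abs_def])

lemma rl_sym: "(rl G W)\<^sup>*\<^sup>* a b \<Longrightarrow> (rl G W)\<^sup>*\<^sup>* b a"
proof (induction rule: rtranclp_induct)
  case base then show ?case by simp
next
  case (step y z)
  have "rl G W z y" using step(2) unfolding rl_def adj_def by (auto simp: insert_commute)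
  then show ?case using step(3) by (rule converse_rtranclp_into_rtranclp)
qed

lemma chain:
  assumes tp: "tpath G lam s t vs es"
  shows "j < length vs \<Longrightarrow> i \<le> j \<Longrightarrow> (\<forall>k. i \<le> k \<and> k \<le> j \<longrightarrow> vs!k \<in> W)
     \<Longrightarrow> (rl G W)\<^sup>*\<^sup>* (vs!i) (vs!j)"
proof (induction j)
  case 0 then show ?case by simp
next
  case (Suc j)
  show ?case
  proof (cases "i = Suc j")
    case True then show ?thesis by simp
  next
    case False
    then have ij: "i \<le> j" using Suc by simp
    have IH: "(rl G W)\<^sup>*\<^sup>* (vs!i) (vs!j)" using Suc ij by simp
    have "j < length es" using Suc(2) tp unfolding tpath_def by simp
    then have "ends G (es!j) = {vs!j, vs!Suc j}" "es!j \<in> edges G" using tp unfolding tpath_def by auto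
    then have "adj G (vs!j) (vs!Suc j)" unfolding adj_def by auto
    moreover have "vs!j \<in> W" "vs!Suc j \<in> W" using Suc(4) ij by auto
    ultimately have "rl G W (vs!j) (vs!Suc j)" unfolding rl_def by simp
    show ?thesis using IH \<open>rl G W (vs!j) (vs!Suc j)\<close> by (rule rtranclp.rtrancl_into_rtrancl)
  qed
qed

lemma on_path:
  assumes tp: "tpath G lam s t vs es" and st: "s \<noteq> t" and z: "z \<in> set vs" "z \<noteq> v"
  shows "(s \<noteq> v \<and> (rl G (verts G - {v}))\<^sup>*\<^sup>* s z) \<or> (t \<noteq> v \<and> (rl G (verts G - {v}))\<^sup>*\<^sup>* t z)"
proof -
  let ?W = "verts G - {v}"
  let ?n = "length vs"
  have d: "distinct vs" "set vs \<subseteq> verts G" using tp unfolding tpath_def by auto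
  have b: "vs!0 = s" "vs!(?n - 1) = t" "?n \<ge> 2" using tpath_basic[OF tp st] by auto
  obtain i where i: "i < ?n" "vs!i = z" using z by (auto simp: in_set_conv_nth)
  have inW: "vs!k \<in> ?W" if "k < ?n" "vs!k \<noteq> v" for k using that d nth_mem by blast
  show ?thesis
  proof (cases "v \<in> set vs")
    case False
    then have "vs!k \<noteq> v" if "k < ?n" for k using that nth_mem by metis
    then have "(rl G ?W)\<^sup>*\<^sup>* (vs!0) (vs!i)" using chain[OF tp, of i 0 ?W] i inW by auto
    moreover have "s \<noteq> v" using False b by (metis nth_mem le_less_trans zero_less_numeral le_trans less_le_trans zero_less_two)
    ultimately show ?thesis using b i by simp
  next
    case True
    then obtain j where j: "j < ?n" "vs!j = v" by (auto simp: in_set_conv_nth)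
    have neq: "vs!k \<noteq> v" if "k < ?n" "k \<noteq> j" for k using that j d nth_eq_iff_index_eq by metis
    have "i \<noteq> j" using i j z by auto
    then show ?thesis
    proof (cases "i < j")
      case True
      then have "(rl G ?W)\<^sup>*\<^sup>* (vs!0) (vs!i)" using chain[OF tp, of i 0 ?W] i inW neq by auto
      moreover have "s \<noteq> v"
      proof -
        have "0 \<noteq> j" "0 < ?n" using True b by auto
        then show ?thesis using neq[of 0] b by simp
      qed
      ultimately show ?thesis using b i by simp
    next
      case False
      then have ji: "j < i" using \<open>i \<noteq> j\<close> by simp
      then have "(rl G ?W)\<^sup>*\<^sup>* (vs!i) (vs!(?n - 1))" using chain[OF tp, of "?n - 1" i ?W] i inW neq by auto
      then have "(rl G ?W)\<^sup>*\<^sup>* t z" using b i by (metis rl_sym)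
      moreover have "t \<noteq> v" using neq[of "?n - 1"] b ji i by auto
      ultimately show ?thesis by simp
    qed
  qed
qed

lemma avoid_path:
  assumes tp: "tpath G lam s t vs es" and st: "s \<noteq> t" and v: "v \<notin> set vs"
  shows "(rl G (verts G - {v}))\<^sup>*\<^sup>* s t"
proof -
  have d: "set vs \<subseteq> verts G" using tp unfolding tpath_def by auto
  have b: "vs!0 = s" "vs!(length vs - 1) = t" "length vs \<ge> 2" using tpath_basic[OF tp st] by auto
  have "vs!k \<in> verts G - {v}" if "k \<le> length vs - 1" for k
  proof -
    have "k < length vs" using that b by linarith
    then have "vs!k \<in> set vs" by (rule nth_mem)
    then show ?thesis using d v by auto
  qed
  then have "(rl G (verts G - {v}))\<^sup>*\<^sup>* (vs!0) (vs!(length vs - 1))"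
    using chain[OF tp, of "length vs - 1" 0 "verts G - {v}"] b by auto
  then show ?thesis using b by simp
qed


lemma mce_facts:
  assumes m: "min_counter_example G lam s t"
  shows "\<exists>vs es. tpath G lam s t vs es" "1 \<le> p_num G lam s t"
proof -
  have ce: "counter_example G lam s t" using m unfolding min_counter_example_def by simp
  have wf: "wf_mgraph G" and sneq: "s \<noteq> t"
    and na: "\<not> adj G s t" and pc: "p_num G lam s t < c_num G lam s t"
    using ce unfolding counter_example_def by auto
  show ex: "\<exists>vs es. tpath G lam s t vs es"
  proof (rule ccontr)
    assume "\<not> ?thesis"
    then have cut0: "temporal_cut G lam s t {}" unfolding temporal_cut_def by (simp add: tpath_del)
    have "(LEAST k. \<exists>S. temporal_cut G lam s t S \<and> card S = k) \<le> card {}"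
      by (rule Least_le) (rule exI[of _ "{}"], simp add: cut0)
    then have "c_num G lam s t \<le> 0" unfolding c_num_def by simp
    then show False using pc by simp
  qed
  then obtain vs es where tp: "tpath G lam s t vs es" by blast
  have "pfam G lam s t 1" unfolding pfam_def
    by (rule exI[of _ "[(vs,es)]"]) (simp add: tp)
  then have "1 \<le> Greatest (pfam G lam s t)"
    using pfam_bound[OF wf na sneq] by (rule Greatest_le_nat)
  then show "1 \<le> p_num G lam s t" by (simp add: p_num_pfam)
qed

lemma conn:
  assumes m: "min_counter_example G lam s t"
  shows "connected_on G (verts G - {v})"
proof (rule ccontr)
  let ?W = "verts G - {v}"
  let ?R = "rl G ?W"
  have ce: "counter_example G lam s t" using m unfolding min_counter_example_def by simp
  have wf: "wf_mgraph G" and sneq: "s \<noteq> t" and stv: "s \<in> verts G" "t \<in> verts G"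
    and na: "\<not> adj G s t" and pc: "p_num G lam s t < c_num G lam s t"
    using ce unfolding counter_example_def by auto
  assume "\<not> connected_on G ?W"
  then obtain x y where xy: "x \<in> ?W" "y \<in> ?W" "\<not> ?R\<^sup>*\<^sup>* x y"
    unfolding connected_on_rl by blast
  define C where "C z \<longleftrightarrow> (s \<noteq> v \<and> ?R\<^sup>*\<^sup>* s z) \<or> (t \<noteq> v \<and> ?R\<^sup>*\<^sup>* t z)" for z
  have isC: "C z" if z: "z \<in> ?W" for z
  proof (rule ccontr)
    assume nC: "\<not> C z"
    have "z \<noteq> s" "z \<noteq> t" using nC z unfolding C_def by auto
    moreover have "z \<notin> set vs" if "tpath G lam s t vs es" for vs es
      using on_path[OF that sneq, of z v] nC z unfolding C_def by auto
    ultimately have "\<not> min_counter_example G lam s t"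
      using del_vertex[OF ce] z by blast
    then show False using m by simp
  qed
  have Cx: "C x" and Cy: "C y" using isC xy by auto
  have "s \<noteq> v \<and> t \<noteq> v \<and> \<not> ?R\<^sup>*\<^sup>* s t"
    using Cx Cy xy(3) unfolding C_def by (meson rl_sym rtranclp_trans)
  then have sv: "s \<noteq> v" "t \<noteq> v" and nst: "\<not> ?R\<^sup>*\<^sup>* s t" by auto
  have allv: "v \<in> set vs" if "tpath G lam s t vs es" for vs es
    using avoid_path[OF that sneq] nst by blast
  obtain vs es where tp: "tpath G lam s t vs es" using mce_facts[OF m] by blast
  have "v \<in> verts G" using allv[OF tp] tp unfolding tpath_def by auto
  then have cutv: "temporal_cut G lam s t {v}" unfolding temporal_cut_def
    using sv allv by (auto simp: tpath_del)
  have "(LEAST k. \<exists>S. temporal_cut G lam s t S \<and> card S = k) \<le> card {v}"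
    by (rule Least_le) (rule exI[of _ "{v}"], simp add: cutv)
  then have "c_num G lam s t \<le> 1" unfolding c_num_def by simp
  then show False using pc mce_facts(2)[OF m] by simp
qed

lemma two_conn:
  assumes m: "min_counter_example G lam s t"
  shows "two_connected G"
proof -
  have ce: "counter_example G lam s t" using m unfolding min_counter_example_def by simp
  have wf: "wf_mgraph G" and sneq: "s \<noteq> t" and na: "\<not> adj G s t"
    using ce unfolding counter_example_def by auto
  have fin: "finite (verts G)" using wf unfolding wf_mgraph_def by simp
  obtain vs es where tp: "tpath G lam s t vs es" using mce_facts[OF m] by blast
  have d: "distinct vs" "set vs \<subseteq> verts G" using tp unfolding tpath_def by auto
  have "3 \<le> length vs" using tpath_long[OF tp sneq na] .
  also have "length vs = card (set vs)" using d by (simp add: distinct_card)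
  also have "\<dots> \<le> card (verts G)" using d fin by (simp add: card_mono)
  finally have c3: "3 \<le> card (verts G)" .
  obtain v where v: "v \<notin> verts G" using ex_new_if_finite[OF infinite_UNIV_nat fin] by blast
  have "connected_on G (verts G)" using conn[OF m, of v] v by simp
  then show ?thesis unfolding two_connected_def using c3 conn[OF m] by blast
qed


lemma sorted_mod:
  fixes L L' :: "nat list"
  assumes s: "sorted L" and l: "length L' = length L"
    and c: "\<And>k. k < length L \<Longrightarrow> L'!k = L!k \<or> (k = 0 \<and> L'!k \<le> L!k) \<or> (k = length L - 1 \<and> L!k \<le> L'!k)"
  shows "sorted L'"
  unfolding sorted_iff_nth_mono
proof (intro allI impI)
  fix i j assume ij: "i \<le> j" "j < length L'"
  show "L'!i \<le> L'!j"
  proof (cases "i = j")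
    case True then show ?thesis by simp
  next
    case False
    then have ij2: "i < j" using ij by simp
    have a: "L'!i \<le> L!i" using c[of i] ij2 ij l by auto
    have b: "L!j \<le> L'!j" using c[of j] ij2 ij l by auto
    have "L!i \<le> L!j" using s ij l by (simp add: sorted_iff_nth_mono)
    then show ?thesis using a b by simp
  qed
qed

lemma replace_edge:
  assumes tp: "tpath G lam s t vs es" and e: "e0 \<in> edges G" "e0 \<noteq> e1" "ends G e0 = ends G e1"
    and pos: "\<And>i. i < length es \<Longrightarrow> es!i = e1 \<Longrightarrow>
       (i = 0 \<and> lam e0 \<le> lam e1) \<or> (i = length es - 1 \<and> lam e1 \<le> lam e0)"
  shows "tpath (G\<lparr>edges := edges G - {e1}\<rparr>) lam s t vs (map (\<lambda>e. if e = e1 then e0 else e) es)"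
proof -
  let ?f = "\<lambda>e. if e = e1 then e0 else e"
  have "sorted (map lam (map ?f es))"
  proof (rule sorted_mod)
    show "sorted (map lam es)" using tp unfolding tpath_def by simp
    show "length (map lam (map ?f es)) = length (map lam es)" by simp
    fix k assume "k < length (map lam es)"
    then show "map lam (map ?f es) ! k = map lam es ! k \<or>
          k = 0 \<and> map lam (map ?f es) ! k \<le> map lam es ! k \<or>
          k = length (map lam es) - 1 \<and> map lam es ! k \<le> map lam (map ?f es) ! k"
      using pos[of k] by auto
  qed
  moreover have "set (map ?f es) \<subseteq> edges G - {e1}" using tp e unfolding tpath_def by auto
  moreover have "\<forall>i < length es. ends G (map ?f es ! i) = {vs ! i, vs ! Suc i}"
    using tp e unfolding tpath_def by auto
  ultimately show ?thesis using tp unfolding tpath_def by simp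
qed


lemma mult1:
  assumes m: "min_counter_example G lam s t" and x: "x \<in> {s,t}" and m1: "1 \<le> mult G x y"
  shows "mult G x y = 1"
proof (rule ccontr)
  assume "mult G x y \<noteq> 1"
  define E where "E = {e \<in> edges G. ends G e = {x,y}}"
  have ce: "counter_example G lam s t" using m unfolding min_counter_example_def by simp
  have wf: "wf_mgraph G" and sneq: "s \<noteq> t" and stv: "s \<in> verts G" "t \<in> verts G"
    using ce unfolding counter_example_def by auto
  have fin: "finite (edges G)" "finite (verts G)" using wf unfolding wf_mgraph_def by auto
  have finE: "finite E" using fin unfolding E_def by simp
  have cE: "card E \<ge> 2" using m1 \<open>mult G x y \<noteq> 1\<close> unfolding mult_def E_def by simp
  then have Ene: "E \<noteq> {}" by auto
  obtain e0 where e0: "e0 \<in> E" "x = s \<longrightarrow> (\<forall>e\<in>E. lam e0 \<le> lam e)"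
    "x \<noteq> s \<longrightarrow> (\<forall>e\<in>E. lam e \<le> lam e0)"
  proof (cases "x = s")
    case True
    have "Min (lam ` E) \<in> lam ` E" using finE Ene by simp
    then obtain e0 where "e0 \<in> E" "lam e0 = Min (lam ` E)" by auto
    moreover have "\<forall>e\<in>E. Min (lam ` E) \<le> lam e" using finE by simp
    ultimately show ?thesis using that True by auto
  next
    case False
    have "Max (lam ` E) \<in> lam ` E" using finE Ene by simp
    then obtain e0 where "e0 \<in> E" "lam e0 = Max (lam ` E)" by auto
    moreover have "\<forall>e\<in>E. lam e \<le> Max (lam ` E)" using finE by simp
    ultimately show ?thesis using that False by auto
  qed
  have "card (E - {e0}) \<ge> 1" using cE e0(1) finE by simp
  then have "E - {e0} \<noteq> {}" by (metis card.empty not_one_le_zero)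
  then obtain e1 where e1: "e1 \<in> E" "e1 \<noteq> e0" by blast
  have ends01: "ends G e0 = ends G e1" "ends G e1 = {x,y}" using e0(1) e1(1) unfolding E_def by auto
  let ?G' = "G\<lparr>edges := edges G - {e1}\<rparr>"
  have "\<not> min_counter_example G lam s t"
  proof (rule reduce[OF ce, of ?G'])
    show "verts ?G' \<subseteq> verts G" "edges ?G' \<subseteq> edges G" "ends ?G' = ends G" by auto
    show "\<forall>e\<in>edges ?G'. ends G e \<subseteq> verts ?G'" using wf unfolding wf_mgraph_def by auto
    show "s \<in> verts ?G'" "t \<in> verts ?G'" using stv by auto
    have "e1 \<in> edges G" using e1 unfolding E_def by auto
    then have "card (edges G - {e1}) < card (edges G)" using fin by (metis card_Diff1_less)
    then show "gsize ?G' < gsize G" unfolding gsize_def by simp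
    fix vs es assume tp: "tpath G lam s t vs es"
    have d: "distinct vs" "length vs = length es + 1" using tp unfolding tpath_def by auto
    have b: "vs!0 = s" "vs!(length vs - 1) = t" using tpath_basic[OF tp sneq] by auto
    have "tpath ?G' lam s t vs (map (\<lambda>e. if e = e1 then e0 else e) es)"
    proof (rule replace_edge[OF tp])
      show "e0 \<in> edges G" using e0 unfolding E_def by auto
      show "e0 \<noteq> e1" using e1 by simp
      show "ends G e0 = ends G e1" using ends01 by simp
      fix i assume i: "i < length es" "es!i = e1"
      then have "{x,y} = {vs!i, vs!Suc i}" using tp ends01 unfolding tpath_def by auto
      then have "x \<in> {vs!i, vs!Suc i}" by (metis insertI1)
      then have en: "x = vs!i \<or> x = vs!Suc i" by simp
      have il: "i < length vs" "Suc i < length vs" using i d by auto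
      show "i = 0 \<and> lam e0 \<le> lam e1 \<or> i = length es - 1 \<and> lam e1 \<le> lam e0"
      proof (cases "x = s")
        case True
        then have "vs!i = vs!0 \<or> vs!Suc i = vs!0" using en b by auto
        moreover have "0 < length vs" using il by linarith
        ultimately have "i = 0 \<or> Suc i = 0" using il nth_eq_iff_index_eq[OF d(1)] by blast
        then have "i = 0" by simp
        then show ?thesis using e0(2) e1 True by auto
      next
        case False
        then have "x = t" using x by auto
        then have "vs!i = vs!(length vs - 1) \<or> vs!Suc i = vs!(length vs - 1)" using en b by auto
        moreover have "length vs - 1 < length vs" using d by simp
        ultimately have "i = length vs - 1 \<or> Suc i = length vs - 1"
          using il nth_eq_iff_index_eq[OF d(1)] by blast
        then have "i = length es - 1" using i d by auto
        then show ?thesis using e0(3) e1 False by auto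
      qed
    qed
    then show "\<exists>es'. tpath ?G' lam s t vs es'" by blast
  qed
  then show False using m by simp
qed

theorem lemma5:
  assumes "min_counter_example G lam s t"
  shows "two_connected G \<and>
         (\<forall>x\<in>{s, t}. \<forall>y. mult G x y \<ge> 1 \<longrightarrow> mult G x y = 1)"
  using two_conn[OF assms] mult1[OF assms] by blast

end
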